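(* Let $d\ge1$, $c\in C(d,2,p)$, and $0\le a\le d$. Then the monomial $x^ay^{d-a}$ has carry pattern $\le c$ if and only if $a\in A^c$, where $A^c=\{a: 0\le a\le d,\ \mathrm{Cont}(a_{[t_r,t_{r+1})})\le\mathrm{Cont}(\delta_{t_r})\text{ for all }0\le r\le\ell\}$.
   Context: $p$ prime. Base-$p$ expansion $d=\sum_{j=0}^Md_jp^j$, $d_M\ne0$, digits in $[0,p-1]$. The carry pattern $(c_1,\dots,c_M)$ of $x^ay^b$ ($a+b=d$) is determined by $\sum_{j<\ell}(a_j+b_j)p^j=c_\ell p^\ell+\sum_{j<\ell}d_jp^j$ for $1\le\ell\le M$ ($c_i=0$ for $i<1$, $i>M$). $C(d,2,p)$ is the set of such carry patterns, ordered componentwise. $\mathcal Z(c,d)=\{0\le k\le M: c_k=0,\ (c_{k-1},d_{k-1})\ne(0,p-1)\}$, with the convention $0\in\mathcal Z(c,d)$, written $\{0=t_0<\dots<t_\ell\}$, and $t_{\ell+1}=M+1$. For an integer $a\ge0$ with base-$p$ digits $a_j$, $a_{[t_r,t_{r+1})}=(a_{t_r},\dots,a_{t_{r+1}-1})$ and $\mathrm{Cont}(a_{[t_r,t_{r+1})})=\sum_{k=t_r}^{t_{r+1}-1}a_kp^{k-t_r}$; $\delta_{t_r}=d_{[t_r,t_{r+1})}$. *)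

theory Defs
  imports "HOL-Computational_Algebra.Primes"
begin

definition digit :: "nat \<Rightarrow> nat \<Rightarrow> nat \<Rightarrow> nat" where
  "digit p a j = a div p ^ j mod p"

definition topIdx :: "nat \<Rightarrow> nat \<Rightarrow> nat" where
  "topIdx p d = Max {j. digit p d j \<noteq> 0}"

text \<open>Carry pattern of x^a y^b with a + b = d (b = d - a), as a function of the
  index l; c_l for 1 \<le> l \<le> M is the unique number with
  sum_{j<l} (a_j+b_j) p^j = c_l p^l + sum_{j<l} d_j p^j, and c_l = 0 otherwise.\<close>
definition carry :: "nat \<Rightarrow> nat \<Rightarrow> nat \<Rightarrow> nat \<Rightarrow> nat" where
  "carry p d a l =
     (if 1 \<le> l \<and> l \<le> topIdx p d then
        ((\<Sum>j<l. (digit p a j + digit p (d - a) j) * p ^ j) - (\<Sum>j<l. digit p d j * p ^ j)) div p ^ l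
      else 0)"

definition carryPatterns :: "nat \<Rightarrow> nat \<Rightarrow> (nat \<Rightarrow> nat) set" where
  "carryPatterns d p = {carry p d a | a. a \<le> d}"

definition carry_le :: "(nat \<Rightarrow> nat) \<Rightarrow> (nat \<Rightarrow> nat) \<Rightarrow> bool" where
  "carry_le c c' \<longleftrightarrow> (\<forall>k. c k \<le> c' k)"

definition Zset :: "nat \<Rightarrow> (nat \<Rightarrow> nat) \<Rightarrow> nat \<Rightarrow> nat set" where
  "Zset p c d = {0} \<union> {k. 1 \<le> k \<and> k \<le> topIdx p d \<and> c k = 0 \<and>
                           \<not> (c (k - 1) = 0 \<and> digit p d (k - 1) = p - 1)}"

text \<open>Successor of t in Z(c,d), i.e. t_{r+1} for t = t_r, with t_{l+1} = M+1.\<close>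
definition nextZ :: "nat \<Rightarrow> (nat \<Rightarrow> nat) \<Rightarrow> nat \<Rightarrow> nat \<Rightarrow> nat" where
  "nextZ p c d t = Min ({s \<in> Zset p c d. t < s} \<union> {topIdx p d + 1})"

definition Cont :: "nat \<Rightarrow> nat \<Rightarrow> nat \<Rightarrow> nat \<Rightarrow> nat" where
  "Cont p a s e = (\<Sum>k\<in>{s..<e}. digit p a k * p ^ (k - s))"

definition Aset :: "nat \<Rightarrow> (nat \<Rightarrow> nat) \<Rightarrow> nat \<Rightarrow> nat set" where
  "Aset p c d = {a. a \<le> d \<and> (\<forall>t \<in> Zset p c d.
        Cont p a t (nextZ p c d t) \<le> Cont p d t (nextZ p c d t))}"

end

theory Submission
  imports Defs
begin

lemma mod_pow_Suc_digit:
  "x mod p^(Suc l) = digit p x l * p^l + x mod (p::nat)^l"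
  using mod_mult2_eq[of x "p^l" p] by (simp add: digit_def power_Suc2 mult.commute)

lemma Cont_split:
  assumes "s \<le> e"
  shows "x mod p^e = Cont p x s e * p^s + x mod (p::nat)^s"
  using assms
proof (induction e rule: dec_induct)
  case base
  then show ?case by (simp add: Cont_def)
next
  case (step n)
  have C: "Cont p x s (Suc n) = Cont p x s n + digit p x n * p^(n-s)"
    using step(1) by (simp add: Cont_def)
  have "p^(n-s) * p^s = p^n" using step(1) by (simp add: power_add[symmetric])
  then show ?case using step mod_pow_Suc_digit[of x p n] C
    by (simp add: algebra_simps)
qed

lemma sum_digits_mod:
  "(\<Sum>j<l. digit p x j * p ^ j) = x mod (p::nat)^l"
proof (induction l)
  case (Suc l)
  have "(\<Sum>j<Suc l. digit p x j * p ^ j) = x mod p^l + digit p x l * p ^ l"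
    using Suc by simp
  then show ?case using mod_pow_Suc_digit[of x p l] by linarith
qed simp

lemma carry_eq:
  assumes "1 \<le> l" "l \<le> topIdx p d" "a \<le> d" "p \<ge> 2"
  shows "carry p d a l = (if a mod p^l \<le> d mod p^l then 0 else 1)"
proof -
  define m where "m = p^l"
  have m0: "m > 0" using assms by (simp add: m_def)
  define x where "x = a mod m"
  define y where "y = (d-a) mod m"
  define z where "z = d mod m"
  have xm: "x < m" "y < m" "z < m" using m0 by (simp_all add: x_def y_def z_def)
  have "(x + y) mod m = z"
    unfolding x_def y_def z_def using assms(3) by (metis le_add_diff_inverse mod_add_eq)
  then have e: "x + y = z + m * ((x+y) div m)"
    by (metis mod_mult_div_eq add.commute mult.commute)
  have c: "carry p d a l = (x + y - z) div m"
    using assms unfolding carry_def by (simp add: sum_digits_mod x_def y_def z_def m_def distrib_right sum.distrib)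
  have q: "(x+y) div m \<le> 1"
  proof -
    have "x + y < 2*m" using xm by simp
    then have "(x+y) div m < 2" using m0 by (simp add: less_mult_imp_div_less)
    then show ?thesis by simp
  qed
  show ?thesis
  proof (cases "x \<le> z")
    case True
    have "(x+y) div m = 0"
    proof (rule ccontr)
      assume "(x+y) div m \<noteq> 0"
      then have "(x+y) div m = 1" using q by simp
      then show False using e True xm by simp
    qed
    then have "x + y - z = 0" using e by simp
    then have "carry p d a l = 0" using c by simp
    then show ?thesis using True unfolding x_def z_def m_def by simp
  next
    case False
    have "(x+y) div m = 1"
    proof (rule ccontr)
      assume "(x+y) div m \<noteq> 1"
      then have "(x+y) div m = 0" using q by simp
      then show False using e False by simp
    qed
    then have "x + y - z = m" using e by simp
    then have "carry p d a l = 1" using c m0 by simp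
    then show ?thesis using False unfolding x_def z_def m_def by simp
  qed
qed

lemma small_pow: "(p::nat) \<ge> 2 \<Longrightarrow> j < p^j"
proof -
  assume "p \<ge> 2"
  then have "2^j \<le> p^j" by (simp add: power_mono)
  moreover have "j < 2^j" by (rule less_exp)
  ultimately show ?thesis by linarith
qed

lemma digits_finite:
  assumes "p \<ge> 2"
  shows "finite {j. digit p d j \<noteq> 0}"
proof -
  have "{j. digit p d j \<noteq> 0} \<subseteq> {..<d}"
  proof
    fix j assume "j \<in> {j. digit p d j \<noteq> 0}"
    then have "d div p^j \<noteq> 0" by (metis digit_def mod_0 mem_Collect_eq)
    then have "p^j \<le> d" by (simp add: div_eq_0_iff)
    then show "j \<in> {..<d}" using small_pow[OF assms, of j] by simp
  qed
  then show ?thesis using finite_subset by blast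
qed

lemma top_bound:
  assumes "p \<ge> 2" "d \<ge> 1"
  shows "d < p ^ Suc (topIdx p d)"
proof -
  define S where "S = {j. p^j \<le> d}"
  have fin: "finite S"
  proof -
    have "S \<subseteq> {..d}" unfolding S_def using small_pow[OF assms(1)]
      by (auto intro: less_imp_le order.trans)
    then show ?thesis using finite_subset by blast
  qed
  have "0 \<in> S" using assms by (simp add: S_def)
  define j where "j = Max S"
  have "j \<in> S" using Max_in[OF fin] \<open>0 \<in> S\<close> j_def by blast
  then have jS: "p^j \<le> d" by (simp add: S_def)
  have lt: "d < p^Suc j"
  proof (rule ccontr)
    assume "\<not> d < p^Suc j"
    then have "Suc j \<in> S" by (simp add: S_def)
    then have "Suc j \<le> j" using Max_ge[OF fin] j_def by blast
    then show False by simp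
  qed
  have "d div p^j < p" using lt
    by (simp add: less_mult_imp_div_less power_Suc2)
  moreover have "d div p^j \<ge> 1"
  proof -
    have "p^j > 0" using assms by simp
    then have "0 < d div p^j" using jS div_greater_zero_iff by blast
    then show ?thesis by simp
  qed
  ultimately have "digit p d j \<noteq> 0" by (simp add: digit_def del: div_greater_zero_iff)
  then have "j \<le> topIdx p d" unfolding topIdx_def
    using Max_ge[OF digits_finite[OF assms(1)]] by blast
  then have "p^Suc j \<le> p^Suc (topIdx p d)" using assms by (simp add: power_increasing)
  then show ?thesis using lt by linarith
qed

theorem mainTheorem11:
  fixes p d a :: nat and c :: "nat \<Rightarrow> nat"
  assumes "prime p" and "1 \<le> d" and "c \<in> carryPatterns d p" and "a \<le> d"
  shows "carry_le (carry p d a) c \<longleftrightarrow> a \<in> Aset p c d"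
proof -
  have p2: "p \<ge> 2" using assms(1) prime_ge_2_nat by blast
  define M where "M = topIdx p d"
  define Z where "Z = Zset p c d"
  define P where "P k \<longleftrightarrow> a mod p^k \<le> d mod p^k" for k
  have ZM: "Z \<subseteq> {..M}" by (auto simp: Z_def Zset_def M_def)
  have finZ: "finite Z" using ZM finite_subset by blast
  have Z0: "0 \<in> Z" by (simp add: Z_def Zset_def)
  have P0: "P 0" by (simp add: P_def)
  have PM: "P (Suc M)"
  proof -
    have "d < p^Suc M" using top_bound[OF p2 assms(2)] by (simp add: M_def)
    then show ?thesis using assms(4) by (simp add: P_def)
  qed
  have blk: "Cont p a t n \<le> Cont p d t n" if "t < n" "P n" for t n
  proof -
    have A: "a mod p^n = Cont p a t n * p^t + a mod p^t" using that by (simp add: Cont_split)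
    have D: "d mod p^n = Cont p d t n * p^t + d mod p^t" using that by (simp add: Cont_split)
    have "d mod p^t < p^t" using p2 by simp
    moreover have "a mod p^n \<le> d mod p^n" using that(2) unfolding P_def .
    ultimately have "Cont p a t n * p^t < (Cont p d t n + 1) * p^t"
      using A D by (simp only: distrib_right mult_1_left)
    then have "Cont p a t n < Cont p d t n + 1" using mult_right_less_imp_less by blast
    then show ?thesis by simp
  qed
  have blk2: "P n" if "t \<le> n" "P t" "Cont p a t n \<le> Cont p d t n" for t n
  proof -
    have A: "a mod p^n = Cont p a t n * p^t + a mod p^t" using that by (simp add: Cont_split)
    have D: "d mod p^n = Cont p d t n * p^t + d mod p^t" using that by (simp add: Cont_split)
    have "Cont p a t n * p^t \<le> Cont p d t n * p^t" using that(3) by (rule mult_right_mono) simp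
    moreover have "a mod p^t \<le> d mod p^t" using that(2) unfolding P_def .
    ultimately show ?thesis using A D unfolding P_def by linarith
  qed
  have carryP: "carry p d a l = 0 \<longleftrightarrow> P l" if "1 \<le> l" "l \<le> M" for l
    using carry_eq[OF that(1) _ assms(4) p2] that by (simp add: M_def P_def)
  have nextZ_prop: "t < nextZ p c d t \<and> (nextZ p c d t \<in> Z \<or> nextZ p c d t = Suc M)"
    if "t \<in> Z" for t
  proof -
    define B where "B = {s \<in> Z. t < s} \<union> {Suc M}"
    have fB: "finite B" using finZ by (simp add: B_def)
    have nB: "B \<noteq> {}" by (simp add: B_def)
    have nx: "nextZ p c d t = Min B" by (simp add: nextZ_def B_def Z_def M_def)
    have "Min B \<in> B" using Min_in[OF fB nB] .
    moreover have "t < Suc M" using that ZM by auto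
    ultimately show ?thesis using nx by (auto simp: B_def)
  qed
  show ?thesis
  proof
    assume L: "carry_le (carry p d a) c"
    have PZ: "P k" if "k \<in> Z" for k
    proof (cases "k = 0")
      case True then show ?thesis using P0 by simp
    next
      case False
      then have k: "1 \<le> k" "k \<le> M" "c k = 0" using that by (auto simp: Z_def Zset_def M_def)
      then have "carry p d a k = 0" using L by (metis carry_le_def le_zero_eq)
      then show ?thesis using carryP k by simp
    qed
    show "a \<in> Aset p c d"
      unfolding Aset_def
    proof (intro CollectI conjI ballI assms(4))
      fix t assume t: "t \<in> Zset p c d"
      then have "t \<in> Z" by (simp add: Z_def)
      from nextZ_prop[OF this] show "Cont p a t (nextZ p c d t) \<le> Cont p d t (nextZ p c d t)"
        using blk PZ PM by metis
    qed
  next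
    assume R: "a \<in> Aset p c d"
    have Rb: "Cont p a t (nextZ p c d t) \<le> Cont p d t (nextZ p c d t)" if "t \<in> Z" for t
      using R that by (auto simp: Aset_def Z_def)
    have PZ: "k \<in> Z \<longrightarrow> P k" for k
    proof (induction k rule: less_induct)
      case (less k)
      show ?case
      proof
        assume kZ: "k \<in> Z"
        show "P k"
        proof (cases "k = 0")
          case True then show ?thesis using P0 by simp
        next
          case False
          define T where "T = Z \<inter> {..<k}"
          have fT: "finite T" using finZ by (simp add: T_def)
          have nT: "0 \<in> T" using Z0 False by (simp add: T_def)
          define t where "t = Max T"
          have tT: "t \<in> T" using Max_in[OF fT] nT by (auto simp: t_def)
          have tk: "t < k" "t \<in> Z" using tT by (auto simp: T_def)
          have kM: "k \<le> M" using kZ ZM by auto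
          have "nextZ p c d t = Min ({s \<in> Z. t < s} \<union> {Suc M})"
            by (simp add: nextZ_def Z_def M_def)
          also have "\<dots> = k"
          proof (rule Min_eqI)
            show "finite ({s \<in> Z. t < s} \<union> {Suc M})" using finZ by simp
            show "k \<in> {s \<in> Z. t < s} \<union> {Suc M}" using kZ tk by simp
            fix y assume y: "y \<in> {s \<in> Z. t < s} \<union> {Suc M}"
            show "k \<le> y"
            proof (rule ccontr)
              assume "\<not> k \<le> y"
              then have "y < k" by simp
              moreover have "y \<noteq> Suc M" using \<open>y < k\<close> kM by auto
              ultimately have "y \<in> T" "t < y" using y by (auto simp: T_def)
              then show False using Max_ge[OF fT] t_def by fastforce
            qed
          qed
          finally have nk: "nextZ p c d t = k" .
          have "P t" using less tk by blast
          then show ?thesis using blk2[of t k] Rb[OF tk(2)] nk tk by simp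
        qed
      qed
    qed
    have PC: "1 \<le> k \<longrightarrow> k \<le> M \<longrightarrow> c k = 0 \<longrightarrow> P k" for k
    proof (induction k)
      case 0 then show ?case by simp
    next
      case (Suc k)
      show ?case
      proof (intro impI)
        assume h: "1 \<le> Suc k" "Suc k \<le> M" "c (Suc k) = 0"
        show "P (Suc k)"
        proof (cases "Suc k \<in> Z")
          case True then show ?thesis using PZ by blast
        next
          case False
          then have cd: "c k = 0" "digit p d k = p - 1"
            using h by (auto simp: Z_def Zset_def M_def)
          have Pk: "P k"
          proof (cases "k = 0")
            case True then show ?thesis using P0 by simp
          next
            case False then show ?thesis using Suc.IH h cd by simp
          qed
          have "digit p a k < p" using p2 by (simp add: digit_def)
          then have "digit p a k \<le> digit p d k" using cd by simp
          then have "digit p a k * p^k \<le> digit p d k * p^k" by simp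
          then show ?thesis using Pk unfolding P_def
            by (simp only: mod_pow_Suc_digit)
        qed
      qed
    qed
    show "carry_le (carry p d a) c"
      unfolding carry_le_def
    proof
      fix l
      show "carry p d a l \<le> c l"
      proof (cases "1 \<le> l \<and> l \<le> M")
        case False
        then show ?thesis by (auto simp: carry_def M_def)
      next
        case True
        show ?thesis
        proof (cases "c l = 0")
          case True
          then show ?thesis using PC carryP \<open>1 \<le> l \<and> l \<le> M\<close> by simp
        next
          case False
          have "carry p d a l \<le> 1"
            using carry_eq[OF _ _ assms(4) p2, of l] True by (simp add: M_def)
          then show ?thesis using False by simp
        qed
      qed
    qed
  qed
qed

end
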